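(* Let $F=P_{\ell_1}\cup\cdots\cup P_{\ell_k}$ be a linear forest with $k\ge2$, $\ell_1\ge\cdots\ge\ell_k\ge2$ and $\ell_i\ne 3$ for all $i$. If $P_{2\delta_F+1}\cup P_{\delta_F+1}$ is $F$-free, then $F=2P_\ell$ for some odd $\ell$. Moreover, in that case $P_{2\delta_F+1}\cup P_{\delta_F+2}$ contains $F$ as a subgraph.
   Context: $P_m$ is the path on $m$ vertices; $G\cup H$ is disjoint union and $tG$ is $t$ disjoint copies of $G$. $\delta_F=\sum_{i=1}^k\lfloor \ell_i/2\rfloor-1$. A graph is $F$-free if it has no subgraph isomorphic to $F$. *)

theory Defs
  imports Main
begin

definition has_subgraph ::
  "'a set \<Rightarrow> ('a \<Rightarrow> 'a \<Rightarrow> bool) \<Rightarrow> 'b set \<Rightarrow> ('b \<Rightarrow> 'b \<Rightarrow> bool) \<Rightarrow> bool" where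
  "has_subgraph VG EG VH EH =
     (\<exists>f. inj_on f VH \<and> f ` VH \<subseteq> VG \<and> (\<forall>u\<in>VH. \<forall>v\<in>VH. EH u v \<longrightarrow> EG (f u) (f v)))"

text \<open>The linear forest P_{l_1} \<union> ... \<union> P_{l_k} given by the list [l_1,...,l_k]:
  vertex (i,j) is the j-th vertex of the i-th path.\<close>

definition lf_V :: "nat list \<Rightarrow> (nat \<times> nat) set" where
  "lf_V ls = {(i, j). i < length ls \<and> j < ls ! i}"

definition lf_E :: "nat list \<Rightarrow> nat \<times> nat \<Rightarrow> nat \<times> nat \<Rightarrow> bool" where
  "lf_E ls u v = (u \<in> lf_V ls \<and> v \<in> lf_V ls \<and> fst u = fst v \<and>
                  (snd v = snd u + 1 \<or> snd u = snd v + 1))"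

definition lf_contains :: "nat list \<Rightarrow> nat list \<Rightarrow> bool" where
  "lf_contains gs fs = has_subgraph (lf_V gs) (lf_E gs) (lf_V fs) (lf_E fs)"

definition delta_F :: "nat list \<Rightarrow> nat" where
  "delta_F ls = (\<Sum>i<length ls. ls ! i div 2) - 1"

end

theory Submission
  imports Defs
begin



lemma off_le:
  fixes w :: "nat \<Rightarrow> nat"
  assumes "finite X" "i \<in> X" "i < i'"
  shows "sum w (X \<inter> {..<i}) + w i \<le> sum w (X \<inter> {..<i'})"
proof -
  have "sum w (insert i (X \<inter> {..<i})) \<le> sum w (X \<inter> {..<i'})"
    by (rule sum_mono2) (use assms in auto)
  moreover have "sum w (insert i (X \<inter> {..<i})) = w i + sum w (X \<inter> {..<i})"
    using assms by (subst sum.insert) auto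
  ultimately show ?thesis by simp
qed

lemma off_lt:
  fixes w :: "nat \<Rightarrow> nat"
  assumes "finite X" "i \<in> X" "j < w i"
  shows "sum w (X \<inter> {..<i}) + j < sum w X"
proof -
  have "sum w (insert i (X \<inter> {..<i})) \<le> sum w X"
    by (rule sum_mono2) (use assms in auto)
  moreover have "sum w (insert i (X \<inter> {..<i})) = w i + sum w (X \<inter> {..<i})"
    using assms by (subst sum.insert) auto
  ultimately show ?thesis using assms by simp
qed

lemma off_inj:
  fixes w :: "nat \<Rightarrow> nat"
  assumes "finite X" "i \<in> X" "i' \<in> X" "j < w i" "j' < w i'"
    and "sum w (X \<inter> {..<i}) + j = sum w (X \<inter> {..<i'}) + j'"
  shows "i = i' \<and> j = j'"
proof (cases i i' rule: linorder_cases)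
  case less
  from off_le[OF assms(1,2) less, of w] assms show ?thesis by simp
next
  case greater
  from off_le[OF assms(1,3) greater, of w] assms show ?thesis by simp
qed (use assms in simp)

lemma embed:
  fixes ls :: "nat list"
  assumes "S \<subseteq> {..<length ls}"
    and "sum (\<lambda>i. ls ! i) S \<le> A"
    and "sum (\<lambda>i. ls ! i) ({..<length ls} - S) \<le> B"
  shows "lf_contains [A, B] ls"
proof -
  define w where "w = (\<lambda>i. ls ! i)"
  define R where "R = {..<length ls} - S"
  have fS: "finite S" using assms(1) finite_subset by blast
  have fR: "finite R" unfolding R_def by simp
  define f where "f = (\<lambda>(i::nat, j::nat). if i \<in> S then (0::nat, sum w (S \<inter> {..<i}) + j)
                                     else (1, sum w (R \<inter> {..<i}) + j))"
  have inR: "i \<in> R" if "i < length ls" "i \<notin> S" for i using that R_def by auto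
  have inj: "inj_on f (lf_V ls)"
  proof (rule inj_onI)
    fix u v assume u: "u \<in> lf_V ls" and v: "v \<in> lf_V ls" and e: "f u = f v"
    obtain i j where uu: "u = (i, j)" by force
    obtain i' j' where vv: "v = (i', j')" by force
    have ij: "i < length ls" "j < w i" "i' < length ls" "j' < w i'"
      using u v uu vv unfolding lf_V_def w_def by auto
    show "u = v"
    proof (cases "i \<in> S")
      case True
      then have "i' \<in> S" using e uu vv unfolding f_def by (auto split: if_splits)
      with True e show ?thesis using off_inj[where w=w, OF fS True _ ij(2) ij(4)] uu vv unfolding f_def by auto
    next
      case False
      then have F': "i' \<notin> S" using e uu vv unfolding f_def by (auto split: if_splits)
      show ?thesis using False F' e off_inj[where w=w, OF fR inR[OF ij(1) False] inR[OF ij(3) F'] ij(2) ij(4)] uu vv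
        unfolding f_def by auto
    qed
  qed
  have img: "f ` lf_V ls \<subseteq> lf_V [A, B]"
  proof
    fix y assume "y \<in> f ` lf_V ls"
    then obtain i j where ij: "i < length ls" "j < w i" and y: "y = f (i, j)"
      unfolding lf_V_def w_def by auto
    show "y \<in> lf_V [A, B]"
    proof (cases "i \<in> S")
      case True
      have "sum w (S \<inter> {..<i}) + j < sum w S" by (rule off_lt[where w=w, OF fS True ij(2)])
      then show ?thesis using True y assms(2) unfolding f_def lf_V_def w_def by auto
    next
      case False
      have "sum w (R \<inter> {..<i}) + j < sum w R" by (rule off_lt[where w=w, OF fR inR[OF ij(1) False] ij(2)])
      then show ?thesis using False y assms(3) unfolding f_def lf_V_def w_def R_def by auto
    qed
  qed
  have edge: "\<forall>u\<in>lf_V ls. \<forall>v\<in>lf_V ls. lf_E ls u v \<longrightarrow> lf_E [A, B] (f u) (f v)"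
  proof (intro ballI impI)
    fix u v assume u: "u \<in> lf_V ls" and v: "v \<in> lf_V ls" and e: "lf_E ls u v"
    have fu: "f u \<in> lf_V [A,B]" "f v \<in> lf_V [A,B]" using img u v by auto
    obtain i j where uu: "u = (i, j)" by force
    obtain i' j' where vv: "v = (i', j')" by force
    have "i = i'" "j' = j + 1 \<or> j = j' + 1" using e uu vv unfolding lf_E_def by auto
    then show "lf_E [A, B] (f u) (f v)" using fu uu vv unfolding lf_E_def f_def by auto
  qed
  show ?thesis unfolding lf_contains_def has_subgraph_def using inj img edge by blast
qed




lemma greedy:
  fixes w :: "nat \<Rightarrow> nat"
  assumes "finite I" "c + 1 \<le> sum w I" "\<forall>i\<in>I. w i \<le> c"
  shows "\<exists>S\<subseteq>I. c + 1 \<le> sum w S \<and> sum w S \<le> 2 * c"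
  using assms
proof (induction I rule: finite_induct)
  case empty then show ?case by simp
next
  case (insert x I)
  show ?case
  proof (cases "c + 1 \<le> sum w I")
    case True
    then obtain S where "S \<subseteq> I" "c + 1 \<le> sum w S \<and> sum w S \<le> 2 * c" using insert by auto
    then show ?thesis by blast
  next
    case False
    then show ?thesis using insert by (intro exI[of _ "insert x I"]) auto
  qed
qed

lemma comb:
  fixes ls :: "nat list"
  assumes len: "length ls \<ge> 2" and vals: "\<forall>l\<in>set ls. l \<ge> 2 \<and> l \<noteq> 3"
    and nex: "\<not>(\<exists>l. odd l \<and> ls = [l, l])"
  shows "\<exists>S\<subseteq>{..<length ls}. card {i\<in>{..<length ls}. odd (ls!i)} + 1 \<le> sum (\<lambda>i. ls!i) S
           \<and> sum (\<lambda>i. ls!i) S \<le> (\<Sum>i<length ls. ls!i div 2)"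
proof -
  define n where "n = length ls"
  define I where "I = {..<n}"
  define w where "w = (\<lambda>i. ls ! i)"
  define Od where "Od = {i\<in>I. odd (w i)}"
  define oc where "oc = card Od"
  define s where "s = (\<Sum>i\<in>I. w i div 2)"
  have fI: "finite I" unfolding I_def by simp
  have wv: "w i \<ge> 2 \<and> w i \<noteq> 3" if "i \<in> I" for i
    using vals that unfolding I_def w_def n_def by auto
  have s2o: "2 * oc \<le> s"
  proof -
    have "2 * oc = (\<Sum>i\<in>Od. 2)" unfolding oc_def by simp
    also have "\<dots> \<le> (\<Sum>i\<in>Od. w i div 2)"
    proof (rule sum_mono)
      fix i assume "i \<in> Od"
      then have "odd (w i)" "w i \<ge> 2" "w i \<noteq> 3" using wv unfolding Od_def by auto
      then show "2 \<le> w i div 2" by presburger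
    qed
    also have "\<dots> \<le> s" unfolding s_def by (rule sum_mono2) (auto simp: fI Od_def)
    finally show ?thesis .
  qed
  have goal: "\<exists>S\<subseteq>I. oc + 1 \<le> sum w S \<and> sum w S \<le> s"
  proof (cases "\<exists>i\<in>I. oc + 1 \<le> w i \<and> w i \<le> s")
    case True
    then obtain i where "i \<in> I" "oc + 1 \<le> w i" "w i \<le> s" by blast
    then show ?thesis by (intro exI[of _ "{i}"]) auto
  next
    case nogood: False
    define Sm where "Sm = {i\<in>I. w i \<le> oc}"
    define Bg where "Bg = {i\<in>I. s < w i}"
    have part: "I = Sm \<union> Bg" "Sm \<inter> Bg = {}" using nogood s2o unfolding Sm_def Bg_def by auto
    have fSm: "finite Sm" "finite Bg" using fI unfolding Sm_def Bg_def by auto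
    show ?thesis
    proof (cases "oc + 1 \<le> sum w Sm")
      case True
      then obtain S where "S \<subseteq> Sm" "oc + 1 \<le> sum w S" "sum w S \<le> 2 * oc"
        using greedy[OF fSm(1) True] unfolding Sm_def by auto
      then show ?thesis using s2o unfolding Sm_def by (intro exI[of _ S]) auto
    next
      case small: False
      show ?thesis
      proof (cases "card Bg \<ge> 2")
        case True
        then obtain a b where ab: "a \<in> Bg" "b \<in> Bg" "a \<noteq> b"
          by (metis One_nat_def card_le_Suc0_iff_eq not_less_eq_eq numeral_2_eq_2 fSm(2))
        have sab: "s = w a div 2 + w b div 2 + (\<Sum>i\<in>I - {a,b}. w i div 2)"
        proof -
          have "s = (\<Sum>i\<in>{a,b}. w i div 2) + (\<Sum>i\<in>I - {a,b}. w i div 2)"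
            unfolding s_def using ab Bg_def fI by (subst sum.subset_diff[of "{a,b}"]) auto
          then show ?thesis using ab by simp
        qed
        have wa: "s < w a" "s < w b" using ab unfolding Bg_def by auto
        show ?thesis
        proof (cases "I - {a,b} = {}")
          case False
          then obtain c where c: "c \<in> I - {a,b}" by blast
          have "w c div 2 \<le> (\<Sum>i\<in>I - {a,b}. w i div 2)"
            using c fI by (intro member_le_sum) auto
          moreover have "w c \<ge> 2" using c wv by auto
          ultimately show ?thesis using sab wa by linarith
        next
          case True
          have abI: "a \<in> I" "b \<in> I" using ab Bg_def by auto
          have "I = {a, b}" using True abI by auto
          then have "card I = 2" using ab by simp
          then have n2: "n = 2" unfolding I_def by simp
          have I01: "I = {0,1}" using n2 unfolding I_def by auto
          then have "{a,b} = {0,1}" using \<open>I = {a,b}\<close> by simp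
          have wab: "(a=0 \<and> b=1) \<or> (a=1 \<and> b=0)" using abI I01 ab(3) by auto
          have s0: "s = w a div 2 + w b div 2" using sab True by simp
          have ma: "w a = 2 * (w a div 2) + w a mod 2" "w a mod 2 \<le> 1"
            "w b = 2 * (w b div 2) + w b mod 2" "w b mod 2 \<le> 1" by auto
          have "w a div 2 = w b div 2" "w a mod 2 = 1" "w b mod 2 = 1" using s0 wa ma by linarith+
          then have "w a = w b \<and> odd (w a)" using ma by (simp add: odd_iff_mod_2_eq_one)
          then have eq: "w 0 = w 1 \<and> odd (w 0)" using wab by auto
          obtain x y where xy: "ls = [x, y]" using n2 unfolding n_def
            by (auto simp: length_Suc_conv numeral_2_eq_2)
          then have "odd x \<and> ls = [x, x]" using eq unfolding w_def by auto
          then show ?thesis using nex by blast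
        qed
      next
        case False
        then have cB: "card Bg \<le> 1" by simp
        have "oc \<le> card (Od \<inter> Sm) + card (Od \<inter> Bg)"
          unfolding oc_def using part fSm card_Un_le[of "Od \<inter> Sm" "Od \<inter> Bg"]
          by (metis Int_Un_distrib Od_def inf.absorb1 mem_Collect_eq subsetI)
        moreover have "card (Od \<inter> Bg) \<le> 1" using cB fSm card_mono[of Bg "Od \<inter> Bg"] by auto
        ultimately have o1: "oc \<le> card (Od \<inter> Sm) + 1" by simp
        have "sum w Sm = sum w (Od \<inter> Sm) + sum w (Sm - Od)"
          using fSm by (metis Int_commute sum.Int_Diff)
        moreover have "5 * card (Od \<inter> Sm) \<le> sum w (Od \<inter> Sm)"
        proof -
          have "5 * card (Od \<inter> Sm) = (\<Sum>i\<in>Od \<inter> Sm. 5)" by simp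
          also have "\<dots> \<le> sum w (Od \<inter> Sm)"
          proof (rule sum_mono)
            fix i assume "i \<in> Od \<inter> Sm"
            then have "odd (w i)" "w i \<ge> 2" "w i \<noteq> 3" using wv unfolding Od_def by auto
            then show "5 \<le> w i" by presburger
          qed
          finally show ?thesis .
        qed
        moreover have "2 * card (Sm - Od) \<le> sum w (Sm - Od)"
        proof -
          have "2 * card (Sm - Od) = (\<Sum>i\<in>Sm - Od. 2)" by simp
          also have "\<dots> \<le> sum w (Sm - Od)"
            by (rule sum_mono) (use wv Sm_def in auto)
          finally show ?thesis .
        qed
        ultimately have "card (Od \<inter> Sm) = 0 \<and> card (Sm - Od) = 0" using small o1 by linarith
        then have "Od \<inter> Sm = {} \<and> Sm - Od = {}" using fSm by auto
        then have "Sm = {}" by auto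
        then have "card I \<le> 1" using part cB by simp
        then show ?thesis using len unfolding I_def n_def by simp
      qed
    qed
  qed
  then show ?thesis unfolding I_def n_def w_def Od_def oc_def s_def by simp
qed




lemma total:
  fixes ls :: "nat list"
  shows "(\<Sum>i<length ls. ls!i) = 2 * (\<Sum>i<length ls. ls!i div 2) + card {i\<in>{..<length ls}. odd (ls!i)}"
proof -
  have "card {i\<in>{..<length ls}. odd (ls!i)} = (\<Sum>i\<in>{i\<in>{..<length ls}. odd (ls!i)}. 1)" by simp
  also have "\<dots> = (\<Sum>i<length ls. if odd (ls!i) then 1 else 0)" by (subst sum.inter_filter) auto
  finally have c: "card {i\<in>{..<length ls}. odd (ls!i)} = (\<Sum>i<length ls. if odd (ls!i) then 1 else 0)" .
  have "(\<Sum>i<length ls. ls!i) = (\<Sum>i<length ls. 2 * (ls!i div 2) + (if odd (ls!i) then 1 else 0))"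
    by (rule sum.cong) auto
  also have "\<dots> = 2 * (\<Sum>i<length ls. ls!i div 2) + (\<Sum>i<length ls. if odd (ls!i) then 1 else 0)"
    by (simp add: sum.distrib sum_distrib_left)
  finally show ?thesis using c by simp
qed

theorem mainTheorem5:
  fixes ls :: "nat list"
  assumes "length ls \<ge> 2"
    and "sorted (rev ls)"
    and "\<forall>l\<in>set ls. l \<ge> 2 \<and> l \<noteq> 3"
  shows "(\<not> lf_contains [2 * delta_F ls + 1, delta_F ls + 1] ls
            \<longrightarrow> (\<exists>l. odd l \<and> ls = [l, l]))
       \<and> ((\<exists>l. odd l \<and> ls = [l, l])
            \<longrightarrow> lf_contains [2 * delta_F ls + 1, delta_F ls + 2] ls)"
proof (intro conjI impI)
  assume nc: "\<not> lf_contains [2 * delta_F ls + 1, delta_F ls + 1] ls"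
  show "\<exists>l. odd l \<and> ls = [l, l]"
  proof (rule ccontr)
    assume nex: "\<not> (\<exists>l. odd l \<and> ls = [l, l])"
    define s where "s = (\<Sum>i<length ls. ls!i div 2)"
    define oc where "oc = card {i\<in>{..<length ls}. odd (ls!i)}"
    obtain S where S: "S \<subseteq> {..<length ls}" "oc + 1 \<le> sum (\<lambda>i. ls!i) S" "sum (\<lambda>i. ls!i) S \<le> s"
      using comb[OF assms(1,3) nex] unfolding s_def oc_def by blast
    have T: "(\<Sum>i<length ls. ls!i) = 2 * s + oc" using total unfolding s_def oc_def by simp
    have sp: "s \<ge> 1"
    proof -
      have "ls!0 div 2 \<le> s" unfolding s_def using assms(1) by (intro member_le_sum) auto
      moreover have "ls!0 \<ge> 2"
      proof -
        have "ls!0 \<in> set ls" using assms(1) by (intro nth_mem) (cases ls, auto)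
        then show ?thesis using assms(3) by blast
      qed
      ultimately show ?thesis by linarith
    qed
    have d: "delta_F ls = s - 1" unfolding delta_F_def s_def by simp
    have split: "(\<Sum>i<length ls. ls!i) = sum (\<lambda>i. ls!i) ({..<length ls} - S) + sum (\<lambda>i. ls!i) S"
      using S(1) by (subst sum.subset_diff[of S]) auto
    have "lf_contains [2 * delta_F ls + 1, delta_F ls + 1] ls"
    proof (rule embed[of "{..<length ls} - S"])
      show "sum ((!) ls) ({..<length ls} - S) \<le> 2 * delta_F ls + 1"
        using split T S d sp by linarith
      have "{..<length ls} - ({..<length ls} - S) = S" using S(1) by auto
      then show "sum ((!) ls) ({..<length ls} - ({..<length ls} - S)) \<le> delta_F ls + 1"
        using S d sp by simp
    qed auto
    with nc show False by simp
  qed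
next
  assume "\<exists>l. odd l \<and> ls = [l, l]"
  then obtain l where l: "odd l" "ls = [l, l]" by blast
  have "l \<ge> 2" "l \<noteq> 3" using assms(3) l by auto
  then have l5: "l \<ge> 5" using l(1) by presburger
  have d2: "delta_F ls = l - 2" unfolding delta_F_def using l by (simp add: lessThan_nat_numeral) presburger
  show "lf_contains [2 * delta_F ls + 1, delta_F ls + 2] ls"
  proof (rule embed[of "{0}"])
    show "sum ((!) ls) {0} \<le> 2 * delta_F ls + 1" using l d2 l5 by simp
    have "{..<length ls} - {0} = {1}" using l by auto
    then show "sum ((!) ls) ({..<length ls} - {0}) \<le> delta_F ls + 2" using l d2 l5 by simp
  qed (use l in auto)
qed


end
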